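(* Let $\hat{\mathcal{O}}_{(\lambda,\lambda')}$ be an irreducible projective quantum field which obeys spin-statistics. Then (i) if $\hat{\mathcal{O}}_{(\lambda,\lambda')}$ is bosonic, both $\lambda$ and $\lambda'$ consist of a single row; (ii) if $\hat{\mathcal{O}}_{(\lambda,\lambda')}$ is fermionic, both $\lambda$ and $\lambda'$ consist of a single column.
   Context: Projective quantum field $\hat{\mathcal{O}}=(U,\rho,\{[\hat{\mathcal{O}}([x])]\})$: $U$ a projective unitary representation of $\mathrm{PGL}_5\mathbb{R}$ on a complex Hilbert space; $\rho$ a finite-dimensional complex representation ($\dim\rho\ne0$) of the universal cover of $\mathrm{PGL}_5\mathbb{R}$; $\hat{\mathcal{O}}([x])$, $[x]\in\mathbb{RP}^4$, tuples of nonzero operator-valued tempered distributions modulo $C^\infty(\mathbb{RP}^4,\mathbb{R}_{\ne0})$ prefactors on a common dense invariant domain, with bounded smearings and $U([g])\hat{\mathcal{O}}_\alpha([x])U^\dagger([g])=\sum_\beta\rho_{\alpha\beta}([g^{-1}])\hat{\mathcal{O}}_\beta([g\cdot x])$. It is bosonic/fermionic if the multiplier of $U$ is trivial/nontrivial in $H^2(\mathrm{PGL}_5\mathbb{R},\mathrm{U}(1))\cong\mathbb{Z}_2$. It is irreducible if the induced Lie algebra representation $\tilde\rho$ of $\mathfrak{pgl}_5\mathbb{R}\cong\mathfrak{sl}_5\mathbb{R}$ is irreducible, i.e. $\tilde\rho$ is the Schur module $\mathbb{CP}^4_{(\lambda,\lambda')}$ of the fundamental representation for a pair of Young diagrams $(\lambda,\lambda')$;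 such a field is written $\hat{\mathcal{O}}_{(\lambda,\lambda')}$ and is regarded as the composite field obtained from a field $\hat{\mathcal{O}}$ with fundamental $\rho$ by applying the Young symmetrizer of $(\lambda,\lambda')$ (symmetrization of the $p=\#\lambda$ upper and $q=\#\lambda'$ lower indices along rows, antisymmetrization along columns) to the components $\hat{\mathcal{O}}_{\alpha_1}\cdots\hat{\mathcal{O}}_{\alpha_p}\Xi^{-1}\hat{\mathcal{O}}^*_{\beta_1}\cdots\hat{\mathcal{O}}^*_{\beta_q}\Xi$ ($\Xi$ Riesz map, $\hat{\mathcal{O}}^*$ dual operators). A composite field $\hat{\mathcal{O}}'_\gamma=\sum a_{\gamma,\alpha_1\dots\alpha_p,\beta_1\dots\beta_q}\hat{\mathcal{O}}_{\alpha_1}\cdots\hat{\mathcal{O}}_{\alpha_p}\Xi^{-1}\hat{\mathcal{O}}^*_{\beta_1}\cdots\hat{\mathcal{O}}^*_{\beta_q}\Xi$ obeys spin-statistics if, when bosonic, it equals its average over all permutations in $S_p\times S_q$ of the $\alpha$- and $\beta$-indices, and, when fermionic, its average weighted by $\mathrm{sgn}(\pi)\mathrm{sgn}(\pi')$. *)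

theory Defs
  imports "HOL-Analysis.Analysis" "HOL-Combinatorics.Permutations"
begin

text \<open>Young diagrams are lists of row lengths (weakly decreasing, positive).
  Boxes are numbered 0,1,2,... in row reading order (the standard tableau
  used to define the Young symmetrizer).\<close>

definition young_diagram :: "nat list \<Rightarrow> bool" where
  "young_diagram la \<longleftrightarrow> sorted_wrt (\<ge>) la \<and> (\<forall>r\<in>set la. 0 < r)"

definition row_set :: "nat list \<Rightarrow> nat \<Rightarrow> nat set" where
  "row_set la i = {sum_list (take i la) ..< sum_list (take i la) + la ! i}"

definition col_set :: "nat list \<Rightarrow> nat \<Rightarrow> nat set" where
  "col_set la j = {sum_list (take i la) + j | i. i < length la \<and> j < la ! i}"

definition row_group :: "nat list \<Rightarrow> (nat \<Rightarrow> nat) set" where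
  "row_group la = {p. p permutes {..<sum_list la} \<and>
      (\<forall>i<length la. p ` row_set la i = row_set la i)}"

definition col_group :: "nat list \<Rightarrow> (nat \<Rightarrow> nat) set" where
  "col_group la = {p. p permutes {..<sum_list la} \<and>
      (\<forall>j. p ` col_set la j = col_set la j)}"

text \<open>Composite field obtained by applying the Young symmetrizer of
  (la, la') (symmetrize along rows, antisymmetrize along columns) to the
  monomials  M al be = O_{al_1}...O_{al_p} Xi^-1 O*_{be_1}...O*_{be_q} Xi,
  where al, be are index lists of length p = #la, q = #la'.\<close>

definition young_field ::
  "nat list \<Rightarrow> nat list \<Rightarrow> ('i list \<Rightarrow> 'i list \<Rightarrow> 'v::real_vector) \<Rightarrow> 'i list \<Rightarrow> 'i list \<Rightarrow> 'v" where
  "young_field la la' M al be =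
     (\<Sum>r\<in>row_group la. \<Sum>c\<in>col_group la. \<Sum>r'\<in>row_group la'. \<Sum>c'\<in>col_group la'.
        of_int (sign c * sign c') *\<^sub>R M (permute_list (r \<circ> c) al) (permute_list (r' \<circ> c') be))"

definition obeys_spin_statistics ::
  "bool \<Rightarrow> nat \<Rightarrow> nat \<Rightarrow> ('i list \<Rightarrow> 'i list \<Rightarrow> 'v::real_vector) \<Rightarrow> bool" where
  "obeys_spin_statistics fermionic p q F \<longleftrightarrow>
     (\<forall>al be. length al = p \<longrightarrow> length be = q \<longrightarrow>
        F al be = (1 / (fact p * fact q)) *\<^sub>R
          (\<Sum>pi\<in>{pi. pi permutes {..<p}}. \<Sum>pi'\<in>{pi'. pi' permutes {..<q}}.
             (if fermionic then of_int (sign pi * sign pi') else 1) *\<^sub>R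
               F (permute_list pi al) (permute_list pi' be)))"

end

theory Submission
  imports Defs
begin

lemma swap3:
  "(\<Sum>a\<in>A. \<Sum>b\<in>B. \<Sum>c\<in>C. g a b c) = (\<Sum>c\<in>C. \<Sum>a\<in>A. \<Sum>b\<in>B. g a b c)"
proof -
  have "(\<Sum>a\<in>A. \<Sum>b\<in>B. \<Sum>c\<in>C. g a b c) = (\<Sum>a\<in>A. \<Sum>c\<in>C. \<Sum>b\<in>B. g a b c)"
    by (rule sum.cong[OF refl], rule sum.swap)
  also have "\<dots> = (\<Sum>c\<in>C. \<Sum>a\<in>A. \<Sum>b\<in>B. g a b c)" by (rule sum.swap)
  finally show ?thesis .
qed

lemma swap6:
  "(\<Sum>a\<in>A. \<Sum>b\<in>B. \<Sum>c\<in>C. \<Sum>d\<in>D. \<Sum>e\<in>E. \<Sum>f\<in>F. g a b c d e f)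
   = (\<Sum>c\<in>C. \<Sum>d\<in>D. \<Sum>e\<in>E. \<Sum>f\<in>F. \<Sum>a\<in>A. \<Sum>b\<in>B. g a b c d e f)"
proof -
  have "(\<Sum>a\<in>A. \<Sum>b\<in>B. \<Sum>c\<in>C. \<Sum>d\<in>D. \<Sum>e\<in>E. \<Sum>f\<in>F. g a b c d e f)
     = (\<Sum>c\<in>C. \<Sum>a\<in>A. \<Sum>b\<in>B. \<Sum>d\<in>D. \<Sum>e\<in>E. \<Sum>f\<in>F. g a b c d e f)"
    by (rule swap3)
  also have "\<dots> = (\<Sum>c\<in>C. \<Sum>d\<in>D. \<Sum>a\<in>A. \<Sum>b\<in>B. \<Sum>e\<in>E. \<Sum>f\<in>F. g a b c d e f)"
    by (rule sum.cong[OF refl], rule swap3)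
  also have "\<dots> = (\<Sum>c\<in>C. \<Sum>d\<in>D. \<Sum>e\<in>E. \<Sum>a\<in>A. \<Sum>b\<in>B. \<Sum>f\<in>F. g a b c d e f)"
    by (rule sum.cong[OF refl], rule sum.cong[OF refl], rule swap3)
  also have "\<dots> = (\<Sum>c\<in>C. \<Sum>d\<in>D. \<Sum>e\<in>E. \<Sum>f\<in>F. \<Sum>a\<in>A. \<Sum>b\<in>B. g a b c d e f)"
    by (rule sum.cong[OF refl], rule sum.cong[OF refl], rule sum.cong[OF refl], rule swap3)
  finally show ?thesis .
qed

lemma sign_sum_zero:
  assumes fin: "finite G" and cl: "\<And>g. g \<in> G \<Longrightarrow> t \<circ> g \<in> G"
    and perm: "\<And>g. g \<in> G \<Longrightarrow> permutation g"
    and tt: "t \<circ> t = id" and pt: "permutation t" and st: "sign t = -1"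
  shows "(\<Sum>g\<in>G. sign g) = (0::int)"
proof -
  have bij: "bij_betw ((\<circ>) t) G G"
  proof (rule bij_betw_byWitness[where f' = "(\<circ>) t"])
    show "\<forall>a\<in>G. t \<circ> (t \<circ> a) = a" using tt by (metis comp_assoc id_comp)
    show "\<forall>a'\<in>G. t \<circ> (t \<circ> a') = a'" using tt by (metis comp_assoc id_comp)
    show "(\<circ>) t ` G \<subseteq> G" using cl by auto
    show "(\<circ>) t ` G \<subseteq> G" using cl by auto
  qed
  have "(\<Sum>g\<in>G. sign g) = (\<Sum>g\<in>G. sign (t \<circ> g))"
    using sum.reindex_bij_betw[OF bij, of sign] by simp
  also have "\<dots> = (\<Sum>g\<in>G. - sign g)"
    by (rule sum.cong[OF refl]) (simp add: sign_compose[OF pt perm] st)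
  also have "\<dots> = - (\<Sum>g\<in>G. sign g)" by (simp add: sum_negf)
  finally show ?thesis by simp
qed

definition eps :: "bool \<Rightarrow> (nat \<Rightarrow> nat) \<Rightarrow> real" where
  "eps fe s = (if fe then real_of_int (sign s) else 1)"

lemma eps_compose:
  assumes "permutation p" "permutation q"
  shows "eps fe (p \<circ> q) = eps fe p * eps fe q"
  using assms by (simp add: eps_def sign_compose)

lemma eps_sq: "eps fe p * eps fe p = 1"
  by (simp add: eps_def flip: of_int_mult)

lemma perm_of_permutes: "p permutes {..<(n::nat)} \<Longrightarrow> permutation p"
  using permutation_permutes by blast

lemma reindex_eps:
  fixes g :: "(nat \<Rightarrow> nat) \<Rightarrow> 'v::real_vector"
  assumes h: "h permutes {..<n}"
  shows "(\<Sum>s\<in>{s. s permutes {..<n}}. eps fe s *\<^sub>R g (s \<circ> h))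
       = eps fe h *\<^sub>R (\<Sum>s\<in>{s. s permutes {..<n}}. eps fe s *\<^sub>R g s)"
proof -
  let ?P = "{s. s permutes {..<n}}"
  have bij: "bij_betw (\<lambda>s. s \<circ> h) ?P ?P"
  proof (rule bij_betw_byWitness[where f' = "\<lambda>s. s \<circ> inv h"])
    show "\<forall>a\<in>?P. a \<circ> h \<circ> inv h = a"
      using permutes_inv_o(1)[OF h] by (simp add: comp_assoc)
    show "\<forall>a\<in>?P. a \<circ> inv h \<circ> h = a"
      using permutes_inv_o(2)[OF h] by (simp add: comp_assoc)
    show "(\<lambda>s. s \<circ> h) ` ?P \<subseteq> ?P" using h permutes_compose by blast
    show "(\<lambda>s. s \<circ> inv h) ` ?P \<subseteq> ?P" using permutes_inv[OF h] permutes_compose by blast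
  qed
  have "(\<Sum>s\<in>?P. eps fe s *\<^sub>R g s) = (\<Sum>s\<in>?P. eps fe (s \<circ> h) *\<^sub>R g (s \<circ> h))"
    using sum.reindex_bij_betw[OF bij, of "\<lambda>s. eps fe s *\<^sub>R g s"] by simp
  also have "\<dots> = (\<Sum>s\<in>?P. (eps fe s * eps fe h) *\<^sub>R g (s \<circ> h))"
    by (rule sum.cong[OF refl]) (simp add: eps_compose[OF perm_of_permutes perm_of_permutes[OF h]])
  finally have "eps fe h *\<^sub>R (\<Sum>s\<in>?P. eps fe s *\<^sub>R g s)
      = (\<Sum>s\<in>?P. (eps fe h * (eps fe s * eps fe h)) *\<^sub>R g (s \<circ> h))"
    by (simp add: scaleR_sum_right)
  also have "\<dots> = (\<Sum>s\<in>?P. eps fe s *\<^sub>R g (s \<circ> h))"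
    by (rule sum.cong[OF refl]) (metis eps_sq mult.commute mult.left_commute mult_1_right)
  finally show ?thesis by simp
qed

lemma reindex2:
  fixes N :: "(nat \<Rightarrow> nat) \<Rightarrow> (nat \<Rightarrow> nat) \<Rightarrow> 'v::real_vector"
  assumes h: "h permutes {..<n}" and h': "h' permutes {..<m}"
  shows "(\<Sum>s\<in>{s. s permutes {..<n}}. \<Sum>s'\<in>{s. s permutes {..<m}}.
            (eps fe s * eps fe s' * k) *\<^sub>R N (s \<circ> h) (s' \<circ> h'))
       = (k * eps fe h * eps fe h') *\<^sub>R (\<Sum>s\<in>{s. s permutes {..<n}}. \<Sum>s'\<in>{s. s permutes {..<m}}.
            (eps fe s * eps fe s') *\<^sub>R N s s')"
proof -
  let ?P = "{s. s permutes {..<n}}" and ?Q = "{s. s permutes {..<m}}"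
  define G where "G x = (\<Sum>s'\<in>?Q. eps fe s' *\<^sub>R N x s')" for x
  have "(\<Sum>s\<in>?P. \<Sum>s'\<in>?Q. (eps fe s * eps fe s' * k) *\<^sub>R N (s \<circ> h) (s' \<circ> h'))
      = (\<Sum>s\<in>?P. (k * eps fe s) *\<^sub>R (\<Sum>s'\<in>?Q. eps fe s' *\<^sub>R N (s \<circ> h) (s' \<circ> h')))"
    by (simp add: scaleR_sum_right mult_ac)
  also have "\<dots> = (\<Sum>s\<in>?P. (k * eps fe s) *\<^sub>R (eps fe h' *\<^sub>R G (s \<circ> h)))"
    unfolding G_def by (rule sum.cong[OF refl]) (simp add: reindex_eps[OF h'])
  also have "\<dots> = (k * eps fe h') *\<^sub>R (\<Sum>s\<in>?P. eps fe s *\<^sub>R G (s \<circ> h))"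
    by (simp add: scaleR_sum_right mult_ac)
  also have "\<dots> = (k * eps fe h') *\<^sub>R (eps fe h *\<^sub>R (\<Sum>s\<in>?P. eps fe s *\<^sub>R G s))"
    by (simp add: reindex_eps[OF h])
  also have "\<dots> = (k * eps fe h * eps fe h') *\<^sub>R (\<Sum>s\<in>?P. \<Sum>s'\<in>?Q.
            (eps fe s * eps fe s') *\<^sub>R N s s')"
    unfolding G_def by (simp add: scaleR_sum_right mult_ac)
  finally show ?thesis .
qed

lemma take_sum_mono: "i \<le> k \<Longrightarrow> sum_list (take i (xs::nat list)) \<le> sum_list (take k xs)"
proof -
  assume "i \<le> k"
  then obtain d where "k = i + d" using le_Suc_ex by blast
  then show ?thesis by (simp add: take_add)
qed

lemma take_sum_Suc: "i < length xs \<Longrightarrow> sum_list (take (Suc i) (xs::nat list)) = sum_list (take i xs) + xs ! i"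
  by (simp add: take_Suc_conv_app_nth)

lemma take_sum_le: "sum_list (take i (xs::nat list)) \<le> sum_list xs"
  by (metis take_sum_mono nat_le_linear take_all)

lemma transpose_image_eq:
  assumes "a \<in> A \<longleftrightarrow> b \<in> A"
  shows "Transposition.transpose a b ` A = A"
  using assms by (auto simp: Transposition.transpose_def image_iff)

lemma group_finite:
  "finite {p. p permutes {..<(n::nat)} \<and> Q p}"
  by (rule finite_subset[OF _ finite_permutations[of "{..<n}"]]) auto

lemma col_transp:
  assumes yd: "young_diagram la" and len: "2 \<le> length la"
  shows "Transposition.transpose 0 (la!0) permutes {..<sum_list la}"
    and "sign (Transposition.transpose 0 (la!0)) = -1"
    and "c \<in> col_group la \<Longrightarrow> Transposition.transpose 0 (la!0) \<circ> c \<in> col_group la"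
proof -
  let ?t = "Transposition.transpose 0 (la!0)"
  have pos: "\<And>i. i < length la \<Longrightarrow> 0 < la ! i"
    using yd unfolding young_diagram_def by (auto simp: nth_mem)
  have ne: "la \<noteq> []" and l1: "1 < length la" using len by auto
  have p0: "0 < la!0" using pos[of 0] ne by simp
  have p1: "0 < la!1" using pos[of 1] len by simp
  have S1: "sum_list (take 1 la) = la!0" using take_sum_Suc[of 0 la] ne by simp
  have S2: "sum_list (take 2 la) = la!0 + la!1"
    using take_sum_Suc[of 1 la] len S1 by (simp add: numeral_2_eq_2)
  have bd: "la!0 + la!1 \<le> sum_list la" using take_sum_le[of 2 la] S2 by simp
  show perm: "?t permutes {..<sum_list la}"
    by (rule permutes_swap_id) (use bd p0 p1 in auto)
  show "sign ?t = -1" using p0 by (simp add: sign_swap_id)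
  have m0: "0 \<in> col_set la j \<longleftrightarrow> j = 0" for j
  proof
    assume "0 \<in> col_set la j" then show "j = 0" unfolding col_set_def by auto
  next
    assume "j = 0" then show "0 \<in> col_set la j" unfolding col_set_def
      using p0 len by (auto intro!: exI[of _ 0])
  qed
  have m1: "la!0 \<in> col_set la j \<longleftrightarrow> j = 0" for j
  proof
    assume "la!0 \<in> col_set la j"
    then obtain i where i: "la!0 = sum_list (take i la) + j" "i < length la" "j < la!i"
      unfolding col_set_def by auto
    show "j = 0"
    proof (cases "i = 0")
      case True then show ?thesis using i by simp
    next
      case False
      then have "sum_list (take 1 la) \<le> sum_list (take i la)" by (intro take_sum_mono) simp
      then show ?thesis using i S1 by simp
    qed
  next
    assume "j = 0" then show "la!0 \<in> col_set la j" unfolding col_set_def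
      using p1 len S1 by (auto intro!: exI[of _ 1])
  qed
  assume c: "c \<in> col_group la"
  show "?t \<circ> c \<in> col_group la"
    unfolding col_group_def
  proof (intro CollectI conjI allI)
    show "?t \<circ> c permutes {..<sum_list la}"
      using c perm permutes_compose unfolding col_group_def by blast
    fix j
    have "(?t \<circ> c) ` col_set la j = ?t ` (c ` col_set la j)" by (simp add: image_comp)
    also have "\<dots> = ?t ` col_set la j" using c unfolding col_group_def by simp
    also have "\<dots> = col_set la j" by (rule transpose_image_eq) (simp add: m0 m1)
    finally show "(?t \<circ> c) ` col_set la j = col_set la j" .
  qed
qed

lemma row_transp:
  assumes i: "i < length la" and two: "2 \<le> la ! i"
  shows "Transposition.transpose (sum_list (take i la)) (sum_list (take i la) + 1) permutes {..<sum_list la}"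
    and "sign (Transposition.transpose (sum_list (take i la)) (sum_list (take i la) + 1)) = -1"
    and "r \<in> row_group la \<Longrightarrow> Transposition.transpose (sum_list (take i la)) (sum_list (take i la) + 1) \<circ> r \<in> row_group la"
proof -
  define S where "S k = sum_list (take k la)" for k
  let ?t = "Transposition.transpose (S i) (S i + 1)"
  have Si: "S (Suc i) = S i + la ! i" unfolding S_def using take_sum_Suc[OF i] .
  have bd: "S (Suc i) \<le> sum_list la" unfolding S_def by (rule take_sum_le)
  show perm: "?t permutes {..<sum_list la}"
    unfolding S_def[symmetric] by (rule permutes_swap_id) (use bd Si two in auto)
  show "sign ?t = -1" unfolding S_def[symmetric] by (simp add: sign_swap_id)
  have mem: "S i \<in> row_set la k \<longleftrightarrow> S i + 1 \<in> row_set la k" if k: "k < length la" for k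
  proof (cases k i rule: linorder_cases)
    case less
    then have "S (Suc k) \<le> S i" unfolding S_def by (intro take_sum_mono) simp
    moreover have "S (Suc k) = S k + la ! k" unfolding S_def using take_sum_Suc[OF k] .
    ultimately show ?thesis unfolding row_set_def S_def[symmetric] by auto
  next
    case equal
    then show ?thesis unfolding row_set_def S_def[symmetric] using two by auto
  next
    case greater
    then have "S (Suc i) \<le> S k" unfolding S_def by (intro take_sum_mono) simp
    then show ?thesis unfolding row_set_def S_def[symmetric] using two Si by auto
  qed
  assume r: "r \<in> row_group la"
  show "Transposition.transpose (sum_list (take i la)) (sum_list (take i la) + 1) \<circ> r \<in> row_group la"
    unfolding S_def[symmetric] row_group_def
  proof (intro CollectI conjI allI impI)
    show "?t \<circ> r permutes {..<sum_list la}"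
      using r perm permutes_compose unfolding row_group_def S_def by blast
    fix k assume k: "k < length la"
    have "(?t \<circ> r) ` row_set la k = ?t ` (r ` row_set la k)" by (simp add: image_comp)
    also have "\<dots> = ?t ` row_set la k" using r k unfolding row_group_def by simp
    also have "\<dots> = row_set la k" by (rule transpose_image_eq) (rule mem[OF k])
    finally show "(?t \<circ> r) ` row_set la k = row_set la k" .
  qed
qed

lemma col_sign_sum:
  assumes "young_diagram la" "2 \<le> length la"
  shows "(\<Sum>c\<in>col_group la. sign c) = (0::int)"
  apply (rule sign_sum_zero[where t = "Transposition.transpose 0 (la!0)"])
  subgoal unfolding col_group_def by (rule group_finite)
  subgoal by (rule col_transp(3)[OF assms])
  subgoal unfolding col_group_def using perm_of_permutes by blast
  subgoal by simp
  subgoal using col_transp(1)[OF assms] perm_of_permutes by blast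
  subgoal by (rule col_transp(2)[OF assms])
  done

lemma row_sign_sum:
  assumes "i < length la" "2 \<le> la ! i"
  shows "(\<Sum>r\<in>row_group la. sign r) = (0::int)"
  apply (rule sign_sum_zero[where t = "Transposition.transpose (sum_list (take i la)) (sum_list (take i la) + 1)"])
  subgoal unfolding row_group_def by (rule group_finite)
  subgoal by (rule row_transp(3)[OF assms])
  subgoal unfolding row_group_def using perm_of_permutes by blast
  subgoal by simp
  subgoal using row_transp(1)[OF assms] perm_of_permutes by blast
  subgoal by (rule row_transp(2)[OF assms])
  done

lemma sym_formula:
  fixes M :: "'i list \<Rightarrow> 'i list \<Rightarrow> 'v::real_vector"
  assumes al: "length al = sum_list la" and be: "length be = sum_list la'"
  shows "(\<Sum>s\<in>{s. s permutes {..<sum_list la}}. \<Sum>s'\<in>{s'. s' permutes {..<sum_list la'}}.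
            (if fe then real_of_int (sign s * sign s') else 1) *\<^sub>R
              young_field la la' M (permute_list s al) (permute_list s' be))
       = (\<Sum>r\<in>row_group la. \<Sum>c\<in>col_group la. \<Sum>r'\<in>row_group la'. \<Sum>c'\<in>col_group la'.
            real_of_int (sign c * sign c') * eps fe (r \<circ> c) * eps fe (r' \<circ> c')) *\<^sub>R
         (\<Sum>s\<in>{s. s permutes {..<sum_list la}}. \<Sum>s'\<in>{s'. s' permutes {..<sum_list la'}}.
            (eps fe s * eps fe s') *\<^sub>R M (permute_list s al) (permute_list s' be))"
proof -
  let ?P = "{s. s permutes {..<sum_list la}}" and ?Q = "{s'. s' permutes {..<sum_list la'}}"
  let ?T = "\<Sum>s\<in>?P. \<Sum>s'\<in>?Q. (eps fe s * eps fe s') *\<^sub>R M (permute_list s al) (permute_list s' be)"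
  have hrc: "r \<circ> c permutes {..<sum_list la}" if "r \<in> row_group la" "c \<in> col_group la" for r c
    using that permutes_compose unfolding row_group_def col_group_def by blast
  have hrc': "r \<circ> c permutes {..<sum_list la'}" if "r \<in> row_group la'" "c \<in> col_group la'" for r c
    using that permutes_compose unfolding row_group_def col_group_def by blast
  have "(\<Sum>s\<in>?P. \<Sum>s'\<in>?Q.
            (if fe then real_of_int (sign s * sign s') else 1) *\<^sub>R
              young_field la la' M (permute_list s al) (permute_list s' be))
      = (\<Sum>s\<in>?P. \<Sum>s'\<in>?Q. \<Sum>r\<in>row_group la. \<Sum>c\<in>col_group la. \<Sum>r'\<in>row_group la'. \<Sum>c'\<in>col_group la'.
            (eps fe s * eps fe s' * real_of_int (sign c * sign c')) *\<^sub>R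
              M (permute_list (s \<circ> (r \<circ> c)) al) (permute_list (s' \<circ> (r' \<circ> c')) be))"
  proof (intro sum.cong refl)
    fix s s' assume "s \<in> ?P" "s' \<in> ?Q"
    have e: "(if fe then real_of_int (sign s * sign s') else 1) = eps fe s * eps fe s'"
      by (simp add: eps_def)
    show "(if fe then real_of_int (sign s * sign s') else 1) *\<^sub>R
              young_field la la' M (permute_list s al) (permute_list s' be)
      = (\<Sum>r\<in>row_group la. \<Sum>c\<in>col_group la. \<Sum>r'\<in>row_group la'. \<Sum>c'\<in>col_group la'.
            (eps fe s * eps fe s' * real_of_int (sign c * sign c')) *\<^sub>R
              M (permute_list (s \<circ> (r \<circ> c)) al) (permute_list (s' \<circ> (r' \<circ> c')) be))"
      unfolding e young_field_def scaleR_sum_right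
    proof (intro sum.cong refl)
      fix r c r' c' assume rc: "r \<in> row_group la" "c \<in> col_group la"
        and rc': "r' \<in> row_group la'" "c' \<in> col_group la'"
      have 1: "permute_list (r \<circ> c) (permute_list s al) = permute_list (s \<circ> (r \<circ> c)) al"
        by (rule permute_list_compose[symmetric]) (use hrc[OF rc] al in simp)
      have 2: "permute_list (r' \<circ> c') (permute_list s' be) = permute_list (s' \<circ> (r' \<circ> c')) be"
        by (rule permute_list_compose[symmetric]) (use hrc'[OF rc'] be in simp)
      show "(eps fe s * eps fe s') *\<^sub>R real_of_int (sign c * sign c') *\<^sub>R
              M (permute_list (r \<circ> c) (permute_list s al)) (permute_list (r' \<circ> c') (permute_list s' be))
          = (eps fe s * eps fe s' * real_of_int (sign c * sign c')) *\<^sub>R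
              M (permute_list (s \<circ> (r \<circ> c)) al) (permute_list (s' \<circ> (r' \<circ> c')) be)"
        unfolding 1 2 by simp
    qed
  qed
  also have "\<dots> = (\<Sum>r\<in>row_group la. \<Sum>c\<in>col_group la. \<Sum>r'\<in>row_group la'. \<Sum>c'\<in>col_group la'.
            \<Sum>s\<in>?P. \<Sum>s'\<in>?Q.
            (eps fe s * eps fe s' * real_of_int (sign c * sign c')) *\<^sub>R
              M (permute_list (s \<circ> (r \<circ> c)) al) (permute_list (s' \<circ> (r' \<circ> c')) be))"
    by (rule swap6)
  also have "\<dots> = (\<Sum>r\<in>row_group la. \<Sum>c\<in>col_group la. \<Sum>r'\<in>row_group la'. \<Sum>c'\<in>col_group la'.
            (real_of_int (sign c * sign c') * eps fe (r \<circ> c) * eps fe (r' \<circ> c')) *\<^sub>R ?T)"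
  proof (intro sum.cong refl)
    fix r c r' c' assume rc: "r \<in> row_group la" "c \<in> col_group la"
      and rc': "r' \<in> row_group la'" "c' \<in> col_group la'"
    show "(\<Sum>s\<in>?P. \<Sum>s'\<in>?Q.
            (eps fe s * eps fe s' * real_of_int (sign c * sign c')) *\<^sub>R
              M (permute_list (s \<circ> (r \<circ> c)) al) (permute_list (s' \<circ> (r' \<circ> c')) be))
        = (real_of_int (sign c * sign c') * eps fe (r \<circ> c) * eps fe (r' \<circ> c')) *\<^sub>R ?T"
      using reindex2[OF hrc[OF rc] hrc'[OF rc'], of fe "real_of_int (sign c * sign c')"
          "\<lambda>x y. M (permute_list x al) (permute_list y be)"] by simp
  qed
  also have "\<dots> = (\<Sum>r\<in>row_group la. \<Sum>c\<in>col_group la. \<Sum>r'\<in>row_group la'. \<Sum>c'\<in>col_group la'.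
            real_of_int (sign c * sign c') * eps fe (r \<circ> c) * eps fe (r' \<circ> c')) *\<^sub>R ?T"
    by (simp add: scaleR_sum_left)
  finally show ?thesis .
qed

lemma sum4_prod_c:
  "(\<Sum>r\<in>A. \<Sum>c\<in>B. \<Sum>r'\<in>C. \<Sum>c'\<in>D. (f c * g c' :: real))
   = of_nat (card A) * (sum f B) * of_nat (card C) * (sum g D)"
  by (simp add: sum_distrib_left sum_distrib_right mult_ac)

lemma sum4_prod_r:
  "(\<Sum>r\<in>A. \<Sum>c\<in>B. \<Sum>r'\<in>C. \<Sum>c'\<in>D. (f r * g r' :: real))
   = (sum f A) * of_nat (card B) * (sum g C) * of_nat (card D)"
  by (simp add: sum_distrib_left sum_distrib_right mult_ac)

theorem proposition3p23:
  fixes la la' :: "nat list"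
    and M :: "'i list \<Rightarrow> 'i list \<Rightarrow> 'v::real_vector"
    and fermionic :: bool
  assumes "CARD('i) = 5"
    and "young_diagram la" and "young_diagram la'"
    and "\<exists>al be. length al = sum_list la \<and> length be = sum_list la' \<and>
           young_field la la' M al be \<noteq> 0"
    and "obeys_spin_statistics fermionic (sum_list la) (sum_list la') (young_field la la' M)"
  shows "(\<not> fermionic \<longrightarrow> length la \<le> 1 \<and> length la' \<le> 1) \<and>
         (fermionic \<longrightarrow> (\<forall>r\<in>set la. r \<le> 1) \<and> (\<forall>r\<in>set la'. r \<le> 1))"
proof (rule ccontr)
  assume nc: "\<not> ?thesis"
  let ?fe = fermionic
  let ?R = "row_group la" and ?C = "col_group la" and ?R' = "row_group la'" and ?C' = "col_group la'"
  have rperm: "permutation r" if "r \<in> row_group l" for r l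
    using that perm_of_permutes unfolding row_group_def by blast
  have cperm: "permutation c" if "c \<in> col_group l" for c l
    using that perm_of_permutes unfolding col_group_def by blast
  have zero: "(\<Sum>r\<in>?R. \<Sum>c\<in>?C. \<Sum>r'\<in>?R'. \<Sum>c'\<in>?C'.
            real_of_int (sign c * sign c') * eps ?fe (r \<circ> c) * eps ?fe (r' \<circ> c')) = 0"
  proof (cases ?fe)
    case False
    have "(\<Sum>r\<in>?R. \<Sum>c\<in>?C. \<Sum>r'\<in>?R'. \<Sum>c'\<in>?C'.
            real_of_int (sign c * sign c') * eps ?fe (r \<circ> c) * eps ?fe (r' \<circ> c'))
        = (\<Sum>r\<in>?R. \<Sum>c\<in>?C. \<Sum>r'\<in>?R'. \<Sum>c'\<in>?C'.
            real_of_int (sign c) * real_of_int (sign c'))"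
      using False by (simp add: eps_def)
    also have "\<dots> = of_nat (card ?R) * real_of_int (\<Sum>c\<in>?C. sign c) * of_nat (card ?R')
         * real_of_int (\<Sum>c\<in>?C'. sign c)"
      by (simp only: sum4_prod_c of_int_sum)
    also have "\<dots> = 0"
    proof -
      have "2 \<le> length la \<or> 2 \<le> length la'" using nc False by auto
      then show ?thesis
      proof (elim disjE)
        assume "2 \<le> length la"
        then have "(\<Sum>c\<in>?C. sign c) = 0" by (rule col_sign_sum[OF assms(2)])
        then show ?thesis by simp
      next
        assume "2 \<le> length la'"
        then have "(\<Sum>c\<in>?C'. sign c) = 0" by (rule col_sign_sum[OF assms(3)])
        then show ?thesis by simp
      qed
    qed
    finally show ?thesis .
  next
    case True
    have "(\<Sum>r\<in>?R. \<Sum>c\<in>?C. \<Sum>r'\<in>?R'. \<Sum>c'\<in>?C'.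
            real_of_int (sign c * sign c') * eps ?fe (r \<circ> c) * eps ?fe (r' \<circ> c'))
        = (\<Sum>r\<in>?R. \<Sum>c\<in>?C. \<Sum>r'\<in>?R'. \<Sum>c'\<in>?C'.
            real_of_int (sign r) * real_of_int (sign r'))"
    proof (intro sum.cong refl)
      fix r c r' c' assume "r \<in> ?R" "c \<in> ?C" "r' \<in> ?R'" "c' \<in> ?C'"
      then have "sign (r \<circ> c) = sign r * sign c" "sign (r' \<circ> c') = sign r' * sign c'"
        by (meson sign_compose rperm cperm)+
      then have "sign c * sign c' * sign (r \<circ> c) * sign (r' \<circ> c')
           = sign r * sign r' * (sign c * sign c) * (sign c' * sign c')"
        by (simp add: mult_ac)
      then have "sign c * sign c' * sign (r \<circ> c) * sign (r' \<circ> c') = sign r * sign r'"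
        by simp
      then show "real_of_int (sign c * sign c') * eps ?fe (r \<circ> c) * eps ?fe (r' \<circ> c')
           = real_of_int (sign r) * real_of_int (sign r')"
        using True unfolding eps_def by (simp flip: of_int_mult)
    qed
    also have "\<dots> = real_of_int (\<Sum>r\<in>?R. sign r) * of_nat (card ?C) * real_of_int (\<Sum>r\<in>?R'. sign r)
         * of_nat (card ?C')"
      by (simp only: sum4_prod_r of_int_sum)
    also have "\<dots> = 0"
    proof -
      have "(\<exists>x\<in>set la. 1 < x) \<or> (\<exists>x\<in>set la'. 1 < x)" using nc True by (auto simp: not_le)
      then have "(\<exists>i<length la. 1 < la ! i) \<or> (\<exists>i<length la'. 1 < la' ! i)"
        by (auto simp: in_set_conv_nth)
      then show ?thesis
      proof (elim disjE exE conjE)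
        fix i assume "i < length la" "1 < la ! i"
        then have "i < length la" "2 \<le> la ! i" by auto
        then have "(\<Sum>c\<in>?R. sign c) = 0" by (rule row_sign_sum)
        then show ?thesis by simp
      next
        fix i assume "i < length la'" "1 < la' ! i"
        then have "i < length la'" "2 \<le> la' ! i" by auto
        then have "(\<Sum>c\<in>?R'. sign c) = 0" by (rule row_sign_sum)
        then show ?thesis by simp
      qed
    qed
    finally show ?thesis .
  qed
  obtain al be where al: "length al = sum_list la" and be: "length be = sum_list la'"
    and nz: "young_field la la' M al be \<noteq> 0" using assms(4) by blast
  have "young_field la la' M al be = (1 / (fact (sum_list la) * fact (sum_list la'))) *\<^sub>R
      (\<Sum>s\<in>{s. s permutes {..<sum_list la}}. \<Sum>s'\<in>{s'. s' permutes {..<sum_list la'}}.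
            (if ?fe then real_of_int (sign s * sign s') else 1) *\<^sub>R
              young_field la la' M (permute_list s al) (permute_list s' be))"
    using assms(5) al be unfolding obeys_spin_statistics_def by blast
  also have "\<dots> = 0"
    unfolding sym_formula[OF al be] zero by simp
  finally show False using nz by simp
qed

end
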